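(* For every positive integer $r$, the symplectic graph $Sp(2r)$ is not $3$-e.c.
   Context: A graph $G$ with vertex set $V$ is $n$-e.c. ($n$-existentially complete) if for every pair of disjoint subsets $A,B\subseteq V$ with $|A\cup B|=n$ (either of $A$, $B$ may be empty) there is a vertex $z\notin A\cup B$ adjacent to every vertex of $A$ and to no vertex of $B$. Let $\mathbb{F}_2$ be the binary field and $N$ the $2r\times 2r$ block-diagonal matrix over $\mathbb{F}_2$ with $r$ diagonal blocks equal to $\begin{pmatrix}0&1\\1&0\end{pmatrix}$. The symplectic graph $Sp(2r)$ has vertex set $\mathbb{F}_2^{2r}\setminus\{0\}$, with distinct vertices $x,y$ adjacent if and only if $x^T N y=1$. *)

theory Defs
  imports Main
begin

definition n_ec :: "nat \<Rightarrow> 'a set \<Rightarrow> ('a \<Rightarrow> 'a \<Rightarrow> bool) \<Rightarrow> bool" where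
  "n_ec n V adj \<longleftrightarrow>
     (\<forall>A B. A \<subseteq> V \<longrightarrow> B \<subseteq> V \<longrightarrow> A \<inter> B = {} \<longrightarrow> card (A \<union> B) = n \<longrightarrow>
        (\<exists>z\<in>V. z \<notin> A \<union> B \<and> (\<forall>a\<in>A. adj z a) \<and> (\<forall>b\<in>B. \<not> adj z b)))"

text \<open>Vectors of F_2^(2r) are represented as functions nat => bool (True = 1) that vanish
  at all coordinates >= 2r; coordinates are indexed 0..2r-1.\<close>
definition F2vecs :: "nat \<Rightarrow> (nat \<Rightarrow> bool) set" where
  "F2vecs m = {x. \<forall>i\<ge>m. x i = False}"

text \<open>The symplectic form x^T N y over F_2, with N block diagonal with r blocks [[0,1],[1,0]]:
  sum over k < r of x_(2k) y_(2k+1) + x_(2k+1) y_(2k), computed mod 2.\<close>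
definition symp_form :: "nat \<Rightarrow> (nat \<Rightarrow> bool) \<Rightarrow> (nat \<Rightarrow> bool) \<Rightarrow> bool" where
  "symp_form r x y \<longleftrightarrow>
     odd (\<Sum>k<r. (of_bool (x (2*k) \<and> y (2*k+1)) + of_bool (x (2*k+1) \<and> y (2*k)) :: nat))"

definition Sp_vertices :: "nat \<Rightarrow> (nat \<Rightarrow> bool) set" where
  "Sp_vertices r = F2vecs (2*r) - {(\<lambda>_. False)}"

definition Sp_adj :: "nat \<Rightarrow> (nat \<Rightarrow> bool) \<Rightarrow> (nat \<Rightarrow> bool) \<Rightarrow> bool" where
  "Sp_adj r x y \<longleftrightarrow> x \<noteq> y \<and> symp_form r x y"

end

theory Submission
  imports Defs
begin

lemma form01:
  assumes "r \<ge> 1" "\<forall>i\<ge>2. w i = False"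
  shows "symp_form r z w \<longleftrightarrow>
     odd (of_bool (z 0 \<and> w 1) + of_bool (z 1 \<and> w 0) :: nat)"
proof -
  let ?f = "\<lambda>k. (of_bool (z (2*k) \<and> w (2*k+1)) + of_bool (z (2*k+1) \<and> w (2*k)) :: nat)"
  have split: "{..<r} = insert 0 {1..<r}" using assms(1) by auto
  have z: "\<forall>k\<in>{1..<r}. ?f k = 0" using assms(2) by auto
  have "(\<Sum>k<r. ?f k) = ?f 0 + (\<Sum>k\<in>{1..<r}. ?f k)"
    unfolding split by (subst sum.insert) auto
  also have "(\<Sum>k\<in>{1..<r}. ?f k) = 0" using z by simp
  finally show ?thesis unfolding symp_form_def by simp
qed

theorem mainTheorem1:
  fixes r :: nat
  assumes "r \<ge> 1"
  shows "\<not> n_ec 3 (Sp_vertices r) (Sp_adj r)"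
proof
  assume H: "n_ec 3 (Sp_vertices r) (Sp_adj r)"
  define x :: "nat \<Rightarrow> bool" where "x = (\<lambda>i. i = 0)"
  define y :: "nat \<Rightarrow> bool" where "y = (\<lambda>i. i = 1)"
  define w :: "nat \<Rightarrow> bool" where "w = (\<lambda>i. i = 0 \<or> i = 1)"
  have ne: "x \<noteq> y" "x \<noteq> w" "y \<noteq> w"
    unfolding x_def y_def w_def by (metis zero_neq_one)+
  have nz: "x \<noteq> (\<lambda>_. False)" "y \<noteq> (\<lambda>_. False)" "w \<noteq> (\<lambda>_. False)"
    unfolding x_def y_def w_def by metis+
  have V: "{x,y,w} \<subseteq> Sp_vertices r"
    using assms nz unfolding Sp_vertices_def F2vecs_def x_def y_def w_def by auto
  have c: "card ({x,y,w} \<union> {}) = 3" using ne by auto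
  obtain z where zz: "Sp_adj r z x" "Sp_adj r z y" "Sp_adj r z w"
    using H V c unfolding n_ec_def by (metis empty_subsetI inf_bot_right insertCI)
  have "symp_form r z x" "symp_form r z y" "symp_form r z w"
    using zz unfolding Sp_adj_def by auto
  moreover have "symp_form r z x \<longleftrightarrow> z 1"
    by (subst form01[OF assms]) (auto simp: x_def)
  moreover have "symp_form r z y \<longleftrightarrow> z 0"
    by (subst form01[OF assms]) (auto simp: y_def)
  moreover have "symp_form r z w \<longleftrightarrow> odd (of_bool (z 0) + of_bool (z 1) :: nat)"
    by (subst form01[OF assms]) (auto simp: w_def)
  ultimately show False by simp
qed

end
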